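(* Let $g:\mathbb{R}^m\to\overline{\mathbb{R}}$ be a polyhedral function and $(\bar z,\bar\lambda)\in\mathrm{gph}\,\partial g$. The following are equivalent: (a) there is a neighborhood $O$ of $(\bar z,\bar\lambda)$ such that for every $(z,\lambda)\in O\cap\mathrm{gph}\,\partial g$, $g$ is strictly twice epi-differentiable at $z$ for $\lambda$; (b) $\bar\lambda\in\mathrm{ri}\,\partial g(\bar z)$.
   Context: A proper function $g:\mathbb{R}^m\to\overline{\mathbb{R}}$ is polyhedral if its epigraph is a polyhedral convex set; $\partial g$ is the convex-analysis subdifferential; $\mathrm{ri}$ is relative interior. For $f:\mathbb{R}^n\to\overline{\mathbb{R}}$, $f(x)$ finite, $v\in\partial f(x)$, $t>0$, set $\Delta_t^2 f(x,v)(w)=\frac{f(x+tw)-f(x)-t\langle v,w\rangle}{\frac12 t^2}$. A family of functions epi-converges to a function if their epigraphs converge to its epigraph in the Painlevé–Kuratowski sense. $f$ is strictly twice epi-differentiable at $\bar x$ for $\bar v\in\partial f(\bar x)$ if the functions $\Delta_t^2 f(x,v)$ epi-converge to some function as $t\searrow 0$ and $(x,v)\to(\bar x,\bar v)$ with $(x,v)\in\mathrm{gph}\,\partial f$ and $f(x)\to f(\bar x)$. *)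

theory Defs
  imports "HOL-Analysis.Analysis"
begin

definition epi :: "('a \<Rightarrow> ereal) \<Rightarrow> ('a \<times> real) set" where
  "epi f = {(x, r). f x \<le> ereal r}"

definition proper_fun :: "('a \<Rightarrow> ereal) \<Rightarrow> bool" where
  "proper_fun f \<longleftrightarrow> (\<forall>x. f x \<noteq> -\<infinity>) \<and> (\<exists>x. f x \<noteq> \<infinity>)"

definition polyhedral_fun :: "('a::euclidean_space \<Rightarrow> ereal) \<Rightarrow> bool" where
  "polyhedral_fun g \<longleftrightarrow> proper_fun g \<and> polyhedron (epi g)"

definition subdiff :: "('a::real_inner \<Rightarrow> ereal) \<Rightarrow> 'a \<Rightarrow> 'a set" where
  "subdiff f x = {v. \<bar>f x\<bar> \<noteq> \<infinity> \<and> (\<forall>y. f x + ereal (v \<bullet> (y - x)) \<le> f y)}"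

definition gph_subdiff :: "('a::real_inner \<Rightarrow> ereal) \<Rightarrow> ('a \<times> 'a) set" where
  "gph_subdiff f = {(x, v). v \<in> subdiff f x}"

definition PK_liminf :: "('p \<Rightarrow> 'b::metric_space set) \<Rightarrow> 'p filter \<Rightarrow> 'b set" where
  "PK_liminf C F = {y. \<forall>e>0. eventually (\<lambda>p. \<exists>z\<in>C p. dist z y < e) F}"

definition PK_limsup :: "('p \<Rightarrow> 'b::metric_space set) \<Rightarrow> 'p filter \<Rightarrow> 'b set" where
  "PK_limsup C F = {y. \<forall>e>0. frequently (\<lambda>p. \<exists>z\<in>C p. dist z y < e) F}"

definition PK_converges :: "('p \<Rightarrow> 'b::metric_space set) \<Rightarrow> 'p filter \<Rightarrow> 'b set \<Rightarrow> bool" where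
  "PK_converges C F S \<longleftrightarrow> PK_liminf C F = S \<and> PK_limsup C F = S"

definition epi_converges :: "('p \<Rightarrow> 'a::metric_space \<Rightarrow> ereal) \<Rightarrow> 'p filter \<Rightarrow> ('a \<Rightarrow> ereal) \<Rightarrow> bool" where
  "epi_converges h F h0 \<longleftrightarrow> PK_converges (\<lambda>p. epi (h p)) F (epi h0)"

definition second_dq :: "('a::real_inner \<Rightarrow> ereal) \<Rightarrow> 'a \<Rightarrow> 'a \<Rightarrow> real \<Rightarrow> 'a \<Rightarrow> ereal" where
  "second_dq f x v t w = (f (x + t *\<^sub>R w) - f x - ereal (t * (v \<bullet> w))) / ereal (t\<^sup>2 / 2)"

text \<open>Filter: (x,v) \<rightarrow> (xb,vb) with (x,v) in gph of subdiff f and f x \<rightarrow> f xb.\<close>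
definition attentive_filter :: "('a::real_inner \<Rightarrow> ereal) \<Rightarrow> 'a \<Rightarrow> 'a \<Rightarrow> ('a \<times> 'a) filter" where
  "attentive_filter f xb vb =
     inf (inf (nhds (xb, vb)) (principal (gph_subdiff f)))
         (filtercomap (\<lambda>(x, v). f x) (nhds (f xb)))"

definition strictly_twice_epi_diff :: "('a::euclidean_space \<Rightarrow> ereal) \<Rightarrow> 'a \<Rightarrow> 'a \<Rightarrow> bool" where
  "strictly_twice_epi_diff f xb vb \<longleftrightarrow>
     (\<exists>h. epi_converges (\<lambda>(t, x, v). second_dq f x v t)
            (at_right 0 \<times>\<^sub>F attentive_filter f xb vb) h)"

end

theory Submission
  imports Defs
begin


lemma ereal_eqI_le:
  assumes "\<And>r. X \<le> ereal r \<longleftrightarrow> m \<le> r" shows "X = ereal m"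
proof (cases X)
  case (real s) then show ?thesis using assms[of s] assms[of m] by auto
next
  case PInf then show ?thesis using assms[of m] by auto
next
  case MInf then show ?thesis using assms[of "m-1"] by auto
qed

lemma ereal_geI:
  assumes "\<And>r. X \<le> ereal r \<Longrightarrow> m \<le> r" shows "ereal m \<le> X"
proof (cases X)
  case (real s) then show ?thesis using assms[of s] by auto
next
  case PInf then show ?thesis by auto
next
  case MInf then show ?thesis using assms[of "m-1"] by auto
qed

lemma not_inf_le: "X \<noteq> \<infinity> \<Longrightarrow> \<exists>r. X \<le> ereal r"
  by (cases X) auto

lemma epi_iff: "(w, r) \<in> epi f \<longleftrightarrow> f w \<le> ereal r"
  by (simp add: epi_def)

lemma dq_le_iff:
  assumes "g x = ereal gx" "t > 0"
  shows "second_dq g x v t w \<le> ereal r \<longleftrightarrow> g (x + t *\<^sub>R w) \<le> ereal (gx + t*(v \<bullet> w) + r*(t^2/2))"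
proof (cases "g (x + t *\<^sub>R w)")
  case (real y)
  have tp: "t^2/2 > 0" using assms by simp
  have "second_dq g x v t w = ereal ((y - gx - t*(v \<bullet> w)) / (t^2/2))"
    unfolding second_dq_def using real assms tp by simp
  moreover have "(y - gx - t*(v \<bullet> w)) / (t^2/2) \<le> r \<longleftrightarrow> y - gx - t*(v \<bullet> w) \<le> r*(t^2/2)"
    by (rule pos_divide_le_eq[OF tp])
  ultimately show ?thesis using real by (simp only: ereal_less_eq(3)) linarith
next
  case PInf
  have tp: "t^2/2 > 0" using assms by simp
  have "second_dq g x v t w = \<infinity>"
    unfolding second_dq_def using PInf assms tp by (simp add: ereal_divide_Infty)
  then show ?thesis using PInf by simp
next
  case MInf
  have tp: "t^2/2 > 0" using assms by simp
  have "second_dq g x v t w = -\<infinity>"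
    unfolding second_dq_def using MInf assms tp by (simp add: ereal_divide_Infty)
  then show ?thesis using MInf by simp
qed

lemma subdiff_iff:
  assumes "g x = ereal gx"
  shows "v \<in> subdiff g x \<longleftrightarrow> (\<forall>y. ereal (gx + v \<bullet> (y - x)) \<le> g y)"
  using assms by (simp add: subdiff_def)

lemma subdiff_finite: "v \<in> subdiff g x \<Longrightarrow> \<exists>gx. g x = ereal gx"
  by (cases "g x") (auto simp: subdiff_def)

lemma att_point:
  assumes "eventually P (attentive_filter f xb vb)" "(xb, vb) \<in> gph_subdiff f"
  shows "P (xb, vb)"
proof -
  from assms(1) obtain Q R where Q: "eventually Q (inf (nhds (xb, vb)) (principal (gph_subdiff f)))"
    and R: "eventually R (filtercomap (\<lambda>(x, v). f x) (nhds (f xb)))"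
    and QR: "\<forall>x. Q x \<and> R x \<longrightarrow> P x"
    unfolding attentive_filter_def eventually_inf by blast
  from Q have "Q (xb, vb)"
    using assms(2) unfolding eventually_inf_principal by (auto dest: eventually_nhds_x_imp_x)
  moreover from R obtain Q' where "eventually Q' (nhds (f xb))" "\<forall>x. Q' ((\<lambda>(x, v). f x) x) \<longrightarrow> R x"
    unfolding eventually_filtercomap by blast
  then have "R (xb, vb)" by (auto dest: eventually_nhds_x_imp_x)
  ultimately show ?thesis using QR by blast
qed

lemma att_nonbot:
  assumes "(xb, vb) \<in> gph_subdiff f"
  shows "attentive_filter f xb vb \<noteq> bot"
proof
  assume "attentive_filter f xb vb = bot"
  then have "eventually (\<lambda>_. False) (attentive_filter f xb vb)" by simp
  then show False using att_point[OF _ assms] by blast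
qed

lemma att_ev:
  assumes "eventually P (attentive_filter f xb vb)"
  shows "\<exists>\<rho>>0. \<forall>x v. v \<in> subdiff f x \<longrightarrow> dist (x, v) (xb, vb) < \<rho> \<longrightarrow> f x = f xb \<longrightarrow> P (x, v)"
proof -
  from assms obtain Q R where Q: "eventually Q (inf (nhds (xb, vb)) (principal (gph_subdiff f)))"
    and R: "eventually R (filtercomap (\<lambda>(x, v). f x) (nhds (f xb)))"
    and QR: "\<forall>x. Q x \<and> R x \<longrightarrow> P x"
    unfolding attentive_filter_def eventually_inf by blast
  from Q obtain d where d: "d > 0" "\<forall>p. dist p (xb, vb) < d \<longrightarrow> p \<in> gph_subdiff f \<longrightarrow> Q p"
    unfolding eventually_inf_principal eventually_nhds_metric by blast
  from R obtain Q' where "eventually Q' (nhds (f xb))" "\<forall>x. Q' ((\<lambda>(x, v). f x) x) \<longrightarrow> R x"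
    unfolding eventually_filtercomap by blast
  then have "Q' (f xb)" by (auto dest: eventually_nhds_x_imp_x)
  show ?thesis
  proof (intro exI[of _ d] conjI allI impI)
    fix x v assume "v \<in> subdiff f x" "dist (x, v) (xb, vb) < d" "f x = f xb"
    then show "P (x, v)" using d QR \<open>Q' (f xb)\<close> \<open>\<forall>x. Q' ((\<lambda>(x, v). f x) x) \<longrightarrow> R x\<close>
      by (auto simp: gph_subdiff_def)
  qed (use d in auto)
qed

lemma att_ev_open:
  assumes "open U" "(xb, vb) \<in> U"
  shows "eventually (\<lambda>p. p \<in> U \<and> p \<in> gph_subdiff f) (attentive_filter f xb vb)"
proof -
  have "eventually (\<lambda>p. p \<in> U \<and> p \<in> gph_subdiff f) (inf (nhds (xb, vb)) (principal (gph_subdiff f)))"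
    unfolding eventually_inf_principal
    using eventually_nhds_in_open[OF assms] by (auto elim: eventually_mono)
  moreover have "attentive_filter f xb vb \<le> inf (nhds (xb, vb)) (principal (gph_subdiff f))"
    unfolding attentive_filter_def by (rule inf_le1)
  ultimately show ?thesis by (rule filter_leD[rotated])
qed



lemma poly_rep:
  assumes "polyhedron S"
  shows "\<exists>K. finite K \<and> S = {q. \<forall>k\<in>K. fst k \<bullet> q \<le> snd k}"
proof -
  obtain F where F: "finite F" "S = \<Inter>F" "\<forall>h\<in>F. \<exists>a b. a \<noteq> 0 \<and> h = {x. a \<bullet> x \<le> b}"
    using assms unfolding polyhedron_def by blast
  then obtain fa fb where fab: "\<forall>h\<in>F. h = {x. fa h \<bullet> x \<le> fb h}"
    by metis
  show ?thesis
  proof (intro exI conjI)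
    show "finite ((\<lambda>h. (fa h, fb h)) ` F)" using F by simp
    show "S = {q. \<forall>k\<in>(\<lambda>h. (fa h, fb h)) ` F. fst k \<bullet> q \<le> snd k}"
      using F(2) fab by auto
  qed
qed

lemma ev_lin:
  fixes p :: "'a::real_inner"
  assumes "c < d"
  shows "eventually (\<lambda>u. c + p \<bullet> u < d) (nhds 0)"
proof -
  have "((\<lambda>u. c + p \<bullet> u) \<longlongrightarrow> c + p \<bullet> 0) (nhds 0)"
    by (intro tendsto_intros filterlim_ident)
  then show ?thesis using assms by (intro order_tendstoD(2)) auto
qed

lemma poly_local:
  fixes g :: "'a::euclidean_space \<Rightarrow> ereal"
  assumes "polyhedral_fun g" "g x0 = ereal g0"
  shows "\<exists>P A \<delta>. finite P \<and> P \<noteq> {} \<and> finite A \<and> \<delta> > 0 \<and>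
     (\<forall>p\<in>P. \<forall>y. ereal (g0 + p \<bullet> y) \<le> g (x0 + y)) \<and>
     (\<forall>a\<in>A. \<forall>y. g (x0 + y) \<noteq> \<infinity> \<longrightarrow> a \<bullet> y \<le> 0) \<and>
     (\<forall>u. norm u < \<delta> \<longrightarrow> g (x0 + u) =
        (if \<forall>a\<in>A. a \<bullet> u \<le> 0 then ereal (g0 + Max ((\<lambda>p. p \<bullet> u) ` P)) else \<infinity>))"
proof -
  obtain K :: "(('a \<times> real) \<times> real) set" where K: "finite K" "epi g = {q. \<forall>k\<in>K. fst k \<bullet> q \<le> snd k}"
    using assms(1) poly_rep unfolding polyhedral_fun_def by blast
  define \<alpha> where "\<alpha> = (\<lambda>k::(('a \<times> real) \<times> real). fst (fst k))"
  define \<beta> where "\<beta> = (\<lambda>k::(('a \<times> real) \<times> real). snd (fst k))"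
  define b where "b = (\<lambda>k::(('a \<times> real) \<times> real). snd k)"
  have epiK: "g y \<le> ereal r \<longleftrightarrow> (\<forall>k\<in>K. \<alpha> k \<bullet> y + \<beta> k * r \<le> b k)" for y r
  proof -
    have "g y \<le> ereal r \<longleftrightarrow> (y, r) \<in> epi g" by (simp add: epi_def)
    also have "\<dots> \<longleftrightarrow> (\<forall>k\<in>K. \<alpha> k \<bullet> y + \<beta> k * r \<le> b k)"
      unfolding K(2) \<alpha>_def \<beta>_def b_def
      by (auto simp: inner_prod_def)
    finally show ?thesis .
  qed
  have beta_le: "\<beta> k \<le> 0" if "k \<in> K" for k
  proof (rule ccontr)
    assume "\<not> \<beta> k \<le> 0"
    then have bp: "\<beta> k > 0" by simp
    define M where "M = max 0 ((b k - \<alpha> k \<bullet> x0 - \<beta> k * g0) / \<beta> k + 1)"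
    have "g x0 \<le> ereal (g0 + M)" using assms(2) by (simp add: M_def)
    then have "\<alpha> k \<bullet> x0 + \<beta> k * (g0 + M) \<le> b k" using epiK that by blast
    moreover have "\<beta> k * M \<ge> b k - \<alpha> k \<bullet> x0 - \<beta> k * g0 + \<beta> k"
    proof -
      have "M \<ge> (b k - \<alpha> k \<bullet> x0 - \<beta> k * g0) / \<beta> k + 1" by (simp add: M_def)
      then have "\<beta> k * M \<ge> \<beta> k * ((b k - \<alpha> k \<bullet> x0 - \<beta> k * g0) / \<beta> k + 1)"
        using bp by (simp add: mult_left_mono)
      moreover have "\<beta> k * ((b k - \<alpha> k \<bullet> x0 - \<beta> k * g0) / \<beta> k + 1) = b k - \<alpha> k \<bullet> x0 - \<beta> k * g0 + \<beta> k"
        using bp by (simp add: field_simps)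
      ultimately show ?thesis by linarith
    qed
    ultimately show False using bp by (simp add: algebra_simps)
  qed
  define K0 where "K0 = {k\<in>K. \<beta> k = 0}"
  define K1 where "K1 = {k\<in>K. \<beta> k < 0}"
  define ell where "ell = (\<lambda>k y. (\<alpha> k \<bullet> y - b k) / (- \<beta> k))"
  define pp where "pp = (\<lambda>k. (1 / (- \<beta> k)) *\<^sub>R \<alpha> k)"
  have Ksplit: "K = K0 \<union> K1" using beta_le by (force simp: K0_def K1_def)
  have fin0: "finite K0" "finite K1" using K(1) by (auto simp: K0_def K1_def)
  have K1_iff: "\<alpha> k \<bullet> y + \<beta> k * r \<le> b k \<longleftrightarrow> ell k y \<le> r" if "k \<in> K1" for k y r
  proof -
    have bn: "- \<beta> k > 0" using that by (simp add: K1_def)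
    have "ell k y \<le> r \<longleftrightarrow> \<alpha> k \<bullet> y - b k \<le> r * (- \<beta> k)"
      unfolding ell_def by (rule pos_divide_le_eq[OF bn])
    then show ?thesis by (simp add: algebra_simps)
  qed
  have K0_iff: "\<alpha> k \<bullet> y + \<beta> k * r \<le> b k \<longleftrightarrow> \<alpha> k \<bullet> y \<le> b k" if "k \<in> K0" for k y r
    using that by (simp add: K0_def)
  have ell_add: "ell k (x0 + u) = ell k x0 + pp k \<bullet> u" if "k \<in> K1" for k u
  proof -
    have "\<beta> k \<noteq> 0" using that by (simp add: K1_def)
    then show ?thesis unfolding ell_def pp_def by (simp add: inner_add_right field_simps)
  qed
  have at0: "\<forall>k\<in>K. \<alpha> k \<bullet> x0 + \<beta> k * g0 \<le> b k" using epiK[of x0 g0] assms(2) by simp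
  have at0_0: "\<alpha> k \<bullet> x0 \<le> b k" if "k \<in> K0" for k
    using at0 that K0_iff Ksplit by blast
  have at0_1: "ell k x0 \<le> g0" if "k \<in> K1" for k
    using at0 that K1_iff Ksplit by blast
  define Act0 where "Act0 = {k\<in>K0. \<alpha> k \<bullet> x0 = b k}"
  define Act1 where "Act1 = {k\<in>K1. ell k x0 = g0}"
  have finA: "finite Act0" "finite Act1" using fin0 by (auto simp: Act0_def Act1_def)
  have Act1_ne: "Act1 \<noteq> {}"
  proof
    assume e: "Act1 = {}"
    have lt: "ell k x0 < g0" if "k \<in> K1" for k
    proof -
      have "k \<notin> Act1" using e by simp
      then have "ell k x0 \<noteq> g0" using that by (simp add: Act1_def)
      then show ?thesis using at0_1[OF that] by simp
    qed
    obtain m where m: "m < g0" "\<forall>k\<in>K1. ell k x0 \<le> m"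
    proof (cases "K1 = {}")
      case True then show ?thesis using that[of "g0 - 1"] by auto
    next
      case False
      define m where "m = Max ((\<lambda>k. ell k x0) ` K1)"
      have "m \<in> (\<lambda>k. ell k x0) ` K1" unfolding m_def using False fin0 by (intro Max_in) auto
      then have "m < g0" using lt by auto
      moreover have "\<forall>k\<in>K1. ell k x0 \<le> m" unfolding m_def using fin0 by auto
      ultimately show ?thesis using that by blast
    qed
    have "\<forall>k\<in>K. \<alpha> k \<bullet> x0 + \<beta> k * m \<le> b k"
    proof
      fix k assume "k \<in> K"
      then consider "k \<in> K0" | "k \<in> K1" using Ksplit by blast
      then show "\<alpha> k \<bullet> x0 + \<beta> k * m \<le> b k"
        by cases (use K0_iff K1_iff at0_0 m in auto)
    qed
    then have "g x0 \<le> ereal m" using epiK by blast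
    then show False using assms(2) m by simp
  qed
  have inact0: "\<alpha> k \<bullet> x0 < b k" if "k \<in> K0 - Act0" for k
    using at0_0[of k] that by (auto simp: Act0_def)
  have inact1: "ell k x0 < g0" if "k \<in> K1 - Act1" for k
    using at0_1[of k] that by (auto simp: Act1_def)
  have ev: "eventually (\<lambda>u. (\<forall>k\<in>K0 - Act0. \<alpha> k \<bullet> x0 + \<alpha> k \<bullet> u < b k) \<and>
        (\<forall>k\<in>K1 - Act1. \<forall>k'\<in>Act1. (ell k x0 - ell k' x0) + (pp k - pp k') \<bullet> u < 0)) (nhds 0)"
  proof (intro eventually_conj eventually_ball_finite ballI)
    show "finite (K0 - Act0)" "finite (K1 - Act1)" "finite Act1" using fin0 finA by auto
    fix k assume "k \<in> K0 - Act0"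
    then show "eventually (\<lambda>u. \<alpha> k \<bullet> x0 + \<alpha> k \<bullet> u < b k) (nhds 0)"
      using inact0 by (intro ev_lin) auto
  next
    fix k k' assume "k \<in> K1 - Act1" "k' \<in> Act1"
    then show "eventually (\<lambda>u. (ell k x0 - ell k' x0) + (pp k - pp k') \<bullet> u < 0) (nhds 0)"
      using inact1[of k] by (intro ev_lin) (auto simp: Act1_def)
  qed
  then obtain \<delta> where \<delta>: "\<delta> > 0" "\<And>u. norm u < \<delta> \<Longrightarrow> (\<forall>k\<in>K0 - Act0. \<alpha> k \<bullet> x0 + \<alpha> k \<bullet> u < b k) \<and>
        (\<forall>k\<in>K1 - Act1. \<forall>k'\<in>Act1. (ell k x0 - ell k' x0) + (pp k - pp k') \<bullet> u < 0)"
    unfolding eventually_nhds_metric dist_norm by auto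
  define P where "P = pp ` Act1"
  define A where "A = \<alpha> ` Act0"
  have Act1_val: "ell k x0 = g0" if "k \<in> Act1" for k using that by (simp add: Act1_def)
  have Act0_val: "\<alpha> k \<bullet> x0 = b k" if "k \<in> Act0" for k using that by (simp add: Act0_def)
  have Act1_K1: "Act1 \<subseteq> K1" and Act0_K0: "Act0 \<subseteq> K0" by (auto simp: Act1_def Act0_def)
  have i: "\<forall>p\<in>P. \<forall>y. ereal (g0 + p \<bullet> y) \<le> g (x0 + y)"
  proof (intro ballI allI)
    fix p y assume "p \<in> P"
    then obtain k where k: "k \<in> Act1" "p = pp k" by (auto simp: P_def)
    show "ereal (g0 + p \<bullet> y) \<le> g (x0 + y)"
    proof (rule ereal_geI)
      fix r assume "g (x0 + y) \<le> ereal r"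
      then have "\<alpha> k \<bullet> (x0 + y) + \<beta> k * r \<le> b k" using epiK k Act1_K1 Ksplit by blast
      then have "ell k (x0 + y) \<le> r" using K1_iff k Act1_K1 by blast
      then show "g0 + p \<bullet> y \<le> r" using ell_add[of k y] k Act1_val Act1_K1 by auto
    qed
  qed
  have ii: "\<forall>a\<in>A. \<forall>y. g (x0 + y) \<noteq> \<infinity> \<longrightarrow> a \<bullet> y \<le> 0"
  proof (intro ballI allI impI)
    fix a y assume "a \<in> A" "g (x0 + y) \<noteq> \<infinity>"
    then obtain k where k: "k \<in> Act0" "a = \<alpha> k" by (auto simp: A_def)
    obtain r where "g (x0 + y) \<le> ereal r" using not_inf_le[OF \<open>g (x0 + y) \<noteq> \<infinity>\<close>] by blast
    then have "\<alpha> k \<bullet> (x0 + y) + \<beta> k * r \<le> b k" using epiK k Act0_K0 Ksplit by blast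
    then have "\<alpha> k \<bullet> (x0 + y) \<le> b k" using K0_iff k Act0_K0 by blast
    then show "a \<bullet> y \<le> 0" using k Act0_val by (simp add: inner_add_right)
  qed
  have iii: "g (x0 + u) =
        (if \<forall>a\<in>A. a \<bullet> u \<le> 0 then ereal (g0 + Max ((\<lambda>p. p \<bullet> u) ` P)) else \<infinity>)"
    if u: "norm u < \<delta>" for u
  proof (cases "\<forall>a\<in>A. a \<bullet> u \<le> 0")
    case False
    then obtain k where k: "k \<in> Act0" "\<alpha> k \<bullet> u > 0" by (auto simp: A_def)
    have "\<not> g (x0 + u) \<le> ereal r" for r
    proof
      assume "g (x0 + u) \<le> ereal r"
      then have "\<alpha> k \<bullet> (x0 + u) + \<beta> k * r \<le> b k" using epiK k Act0_K0 Ksplit by blast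
      then have "\<alpha> k \<bullet> (x0 + u) \<le> b k" using K0_iff k Act0_K0 by blast
      then show False using k Act0_val by (simp add: inner_add_right)
    qed
    then have "g (x0 + u) = \<infinity>" using not_inf_le by blast
    then show ?thesis using False by simp
  next
    case True
    define M where "M = Max ((\<lambda>k. pp k \<bullet> u) ` Act1)"
    have MP: "Max ((\<lambda>p. p \<bullet> u) ` P) = M" unfolding M_def P_def by (simp add: image_image)
    have Mge: "pp k \<bullet> u \<le> M" if "k \<in> Act1" for k unfolding M_def using finA that by auto
    obtain k1 where k1: "k1 \<in> Act1" "pp k1 \<bullet> u = M"
    proof -
      have "M \<in> (\<lambda>k. pp k \<bullet> u) ` Act1" unfolding M_def using finA Act1_ne by (intro Max_in) auto
      then show ?thesis using that by auto
    qed
    have "g (x0 + u) \<le> ereal r \<longleftrightarrow> g0 + M \<le> r" for r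
    proof
      assume "g (x0 + u) \<le> ereal r"
      then have "\<alpha> k1 \<bullet> (x0 + u) + \<beta> k1 * r \<le> b k1" using epiK k1 Act1_K1 Ksplit by blast
      then have "ell k1 (x0 + u) \<le> r" using K1_iff k1 Act1_K1 by blast
      then show "g0 + M \<le> r" using ell_add[of k1 u] k1 Act1_val Act1_K1 by auto
    next
      assume r: "g0 + M \<le> r"
      have "\<forall>k\<in>K. \<alpha> k \<bullet> (x0 + u) + \<beta> k * r \<le> b k"
      proof
        fix k assume "k \<in> K"
        then consider "k \<in> Act0" | "k \<in> K0 - Act0" | "k \<in> Act1" | "k \<in> K1 - Act1"
          using Ksplit by blast
        then show "\<alpha> k \<bullet> (x0 + u) + \<beta> k * r \<le> b k"
        proof cases
          case 1
          then have "\<alpha> k \<bullet> u \<le> 0" using True by (auto simp: A_def)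
          moreover have "\<beta> k = 0" using 1 Act0_K0 by (auto simp: K0_def)
          ultimately show ?thesis using Act0_val[OF 1] by (simp add: inner_add_right)
        next
          case 2
          then have "\<beta> k = 0" by (auto simp: K0_def)
          moreover have "\<alpha> k \<bullet> x0 + \<alpha> k \<bullet> u < b k" using 2 \<delta>(2)[OF u] by blast
          ultimately show ?thesis by (simp add: inner_add_right)
        next
          case 3
          have "ell k (x0 + u) \<le> r" using ell_add[of k u] 3 Act1_val Act1_K1 Mge[OF 3] r by auto
          then show ?thesis using K1_iff 3 Act1_K1 by blast
        next
          case 4
          have "(ell k x0 - ell k1 x0) + (pp k - pp k1) \<bullet> u < 0" using \<delta>(2)[OF u] 4 k1 by blast
          moreover have "ell k (x0 + u) = ell k x0 + pp k \<bullet> u" using ell_add[of k u] 4 by blast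
          moreover have "ell k1 (x0 + u) = ell k1 x0 + pp k1 \<bullet> u" using ell_add[of k1 u] k1 Act1_K1 by blast
          ultimately have "ell k (x0 + u) < ell k1 (x0 + u)" by (simp add: inner_diff_left)
          moreover have "ell k1 (x0 + u) \<le> r" using ell_add[of k1 u] k1 Act1_val Act1_K1 r by auto
          ultimately have "ell k (x0 + u) \<le> r" by linarith
          then show ?thesis using K1_iff[of k "x0 + u" r] 4 by blast
        qed
      qed
      then show "g (x0 + u) \<le> ereal r" using epiK by blast
    qed
    then have "g (x0 + u) = ereal (g0 + M)" by (rule ereal_eqI_le)
    then show ?thesis using True MP by simp
  qed
  have "finite P" "P \<noteq> {}" "finite A" using finA Act1_ne by (auto simp: P_def A_def)
  then show ?thesis using \<delta>(1) i ii iii by blast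
qed



lemma Max_scale:
  fixes P :: "'a::real_inner set"
  assumes "finite P" "P \<noteq> {}" "c \<ge> 0"
  shows "Max ((\<lambda>p. p \<bullet> (c *\<^sub>R u)) ` P) = c * Max ((\<lambda>p. p \<bullet> u) ` P)"
proof -
  have "mono ((*) c)" using assms(3) by (auto intro: monoI mult_left_mono)
  then have "c * Max ((\<lambda>p. p \<bullet> u) ` P) = Max ((*) c ` ((\<lambda>p. p \<bullet> u) ` P))"
    using assms by (intro mono_Max_commute) auto
  then show ?thesis by (simp add: image_image)
qed

locale PL =
  fixes g :: "'a::euclidean_space \<Rightarrow> ereal" and zb lb :: 'a and g0 :: real and P A :: "'a set" and \<delta> :: real
  assumes gz: "g zb = ereal g0" and lbC: "lb \<in> subdiff g zb"
   and finP: "finite P" and neP: "P \<noteq> {}" and finA: "finite A" and dpos: "\<delta> > 0"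
   and Pi: "\<forall>p\<in>P. \<forall>y. ereal (g0 + p \<bullet> y) \<le> g (zb + y)"
   and Aii: "\<forall>a\<in>A. \<forall>y. g (zb + y) \<noteq> \<infinity> \<longrightarrow> a \<bullet> y \<le> 0"
   and loc: "\<forall>u. norm u < \<delta> \<longrightarrow> g (zb + u) =
        (if \<forall>a\<in>A. a \<bullet> u \<le> 0 then ereal (g0 + Max ((\<lambda>p. p \<bullet> u) ` P)) else \<infinity>)"
begin

abbreviation "C \<equiv> subdiff g zb"

lemma C_iff: "v \<in> C \<longleftrightarrow> (\<forall>u. ereal (g0 + v \<bullet> u) \<le> g (zb + u))"
proof -
  have "v \<in> C \<longleftrightarrow> (\<forall>y. ereal (g0 + v \<bullet> (y - zb)) \<le> g y)" by (rule subdiff_iff[where g=g and x=zb, OF gz])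
  also have "\<dots> \<longleftrightarrow> (\<forall>u. ereal (g0 + v \<bullet> u) \<le> g (zb + u))"
  proof
    assume "\<forall>y. ereal (g0 + v \<bullet> (y - zb)) \<le> g y"
    then show "\<forall>u. ereal (g0 + v \<bullet> u) \<le> g (zb + u)" by (metis add_diff_cancel_left')
  next
    assume "\<forall>u. ereal (g0 + v \<bullet> u) \<le> g (zb + u)"
    then show "\<forall>y. ereal (g0 + v \<bullet> (y - zb)) \<le> g y" by (metis add.commute diff_add_cancel)
  qed
  finally show ?thesis .
qed

lemma P_C: "p \<in> P \<Longrightarrow> p \<in> C"
  using Pi C_iff by blast

lemma A_C:
  assumes "a \<in> A" "v \<in> C" shows "v + a \<in> C"
  unfolding C_iff
proof
  fix u
  show "ereal (g0 + (v + a) \<bullet> u) \<le> g (zb + u)"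
  proof (cases "g (zb + u) = \<infinity>")
    case False
    then have "a \<bullet> u \<le> 0" using Aii assms(1) by blast
    then have "ereal (g0 + (v + a) \<bullet> u) \<le> ereal (g0 + v \<bullet> u)" by (simp add: inner_add_left)
    also have "\<dots> \<le> g (zb + u)" using assms(2) C_iff by blast
    finally show ?thesis .
  qed simp
qed

lemma C_conv: "convex C"
  unfolding convex_def
proof (intro ballI allI impI)
  fix x y and s t :: real
  assume xy: "x \<in> C" "y \<in> C" and st: "0 \<le> s" "0 \<le> t" "s + t = 1"
  show "s *\<^sub>R x + t *\<^sub>R y \<in> C"
    unfolding C_iff
  proof
    fix u
    show "ereal (g0 + (s *\<^sub>R x + t *\<^sub>R y) \<bullet> u) \<le> g (zb + u)"
    proof (cases "g (zb + u)")
      case (real r)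
      have "ereal (g0 + x \<bullet> u) \<le> g (zb + u)" "ereal (g0 + y \<bullet> u) \<le> g (zb + u)"
        using xy C_iff by blast+
      then have h: "g0 + x \<bullet> u \<le> r" "g0 + y \<bullet> u \<le> r" using real by simp_all
      have "s * (g0 + x \<bullet> u) \<le> s * r" "t * (g0 + y \<bullet> u) \<le> t * r"
        using st h by (auto intro: mult_left_mono)
      moreover have "s * r + t * r = r" "s * g0 + t * g0 = g0" using st(3)
        by (simp_all add: distrib_right[symmetric])
      moreover have "(s *\<^sub>R x + t *\<^sub>R y) \<bullet> u = s * (x \<bullet> u) + t * (y \<bullet> u)"
        by (simp add: inner_add_left)
      ultimately have "g0 + (s *\<^sub>R x + t *\<^sub>R y) \<bullet> u \<le> r"
        by (simp add: algebra_simps)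
      then show ?thesis using real by simp
    next
      case PInf then show ?thesis by simp
    next
      case MInf
      have "ereal (g0 + x \<bullet> u) \<le> g (zb + u)" using xy C_iff by blast
      then show ?thesis using MInf by simp
    qed
  qed
qed

lemma gph_local:
  assumes v: "v \<in> subdiff g (zb + u)" and u: "norm u < \<delta> / 2"
  shows "v \<in> C \<and> g (zb + u) = ereal (g0 + v \<bullet> u)"
proof -
  obtain gx where gx: "g (zb + u) = ereal gx" using subdiff_finite[OF v] by blast
  have sub: "\<forall>y. ereal (gx + v \<bullet> (y - (zb + u))) \<le> g y" using subdiff_iff[where g=g and x="zb+u", OF gx] v by blast
  have u1: "norm u < \<delta>" using u dpos by simp
  have Au: "\<forall>a\<in>A. a \<bullet> u \<le> 0"
  proof (rule ccontr)
    assume "\<not> (\<forall>a\<in>A. a \<bullet> u \<le> 0)"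
    then have "g (zb + u) = \<infinity>" using loc u1 by auto
    then show False using gx by simp
  qed
  define M where "M = Max ((\<lambda>p. p \<bullet> u) ` P)"
  have gxM: "gx = g0 + M" using loc u1 Au gx by (simp add: M_def)
  have u2: "norm (2 *\<^sub>R u) < \<delta>" using u by simp
  have Au2: "\<forall>a\<in>A. a \<bullet> (2 *\<^sub>R u) \<le> 0" using Au by simp
  have "Max ((\<lambda>p. p \<bullet> (2 *\<^sub>R u)) ` P) = 2 * M" unfolding M_def using finP neP by (intro Max_scale) auto
  then have g2: "g (zb + 2 *\<^sub>R u) = ereal (g0 + 2 * M)" using loc u2 Au2 by simp
  have "ereal (gx + v \<bullet> ((zb + 2 *\<^sub>R u) - (zb + u))) \<le> g (zb + 2 *\<^sub>R u)" using sub by blast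
  then have h1: "gx + v \<bullet> u \<le> g0 + 2 * M" using g2 by (simp add: algebra_simps scaleR_2)
  have "ereal (gx + v \<bullet> (zb - (zb + u))) \<le> g zb" using sub by blast
  then have h2: "gx - v \<bullet> u \<le> g0" using gz by simp
  have gxv: "gx = g0 + v \<bullet> u" using h1 h2 gxM by linarith
  have "v \<in> C" unfolding C_iff
  proof
    fix w
    have "ereal (gx + v \<bullet> ((zb + w) - (zb + u))) \<le> g (zb + w)" using sub by blast
    then show "ereal (g0 + v \<bullet> w) \<le> g (zb + w)" using gxv by (simp add: inner_diff_right)
  qed
  then show ?thesis using gx gxv by simp
qed


definition "SS = {s. \<forall>c\<in>C. (c - lb) \<bullet> s = 0}"

lemma SS_add: "s1 \<in> SS \<Longrightarrow> s2 \<in> SS \<Longrightarrow> s1 + s2 \<in> SS"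
  by (simp add: SS_def inner_add_right)

lemma SS_scale: "s \<in> SS \<Longrightarrow> c *\<^sub>R s \<in> SS"
  by (simp add: SS_def)

lemma SS_C: "s \<in> SS \<Longrightarrow> v \<in> C \<Longrightarrow> v \<bullet> s = lb \<bullet> s"
  by (auto simp: SS_def inner_diff_left)

lemma AFF:
  assumes s: "s \<in> SS" "norm s < \<delta>"
  shows "g (zb + s) = ereal (g0 + lb \<bullet> s)"
proof -
  have "a \<bullet> s = 0" if "a \<in> A" for a
  proof -
    have "lb + a \<in> C" using A_C[OF that lbC] .
    then show ?thesis using s(1) unfolding SS_def by force
  qed
  then have Au: "\<forall>a\<in>A. a \<bullet> s \<le> 0" by simp
  have "(\<lambda>p. p \<bullet> s) ` P = {lb \<bullet> s}" using SS_C[OF s(1)] P_C neP by auto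
  then have "Max ((\<lambda>p. p \<bullet> s) ` P) = lb \<bullet> s" by simp
  then show ?thesis using loc s(2) Au by simp
qed

lemma shift:
  assumes ball: "ball lb \<epsilon> \<inter> affine hull C \<subseteq> C"
    and v: "v \<in> C" "norm (v - lb) < \<epsilon>/2" and c: "c \<in> C" and th: "\<bar>\<theta>\<bar> * norm (c - lb) < \<epsilon>/2"
  shows "v + \<theta> *\<^sub>R (c - lb) \<in> C"
proof -
  have "v + \<theta> *\<^sub>R (c - lb) \<in> affine hull C"
    using v c lbC by (intro mem_affine_3_minus affine_affine_hull hull_inc)
  moreover have "dist lb (v + \<theta> *\<^sub>R (c - lb)) < \<epsilon>"
  proof -
    have "dist lb (v + \<theta> *\<^sub>R (c - lb)) = norm ((v - lb) + \<theta> *\<^sub>R (c - lb))"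
      by (simp add: dist_norm norm_minus_commute algebra_simps)
    also have "\<dots> \<le> norm (v - lb) + \<bar>\<theta>\<bar> * norm (c - lb)"
      by (metis norm_scaleR norm_triangle_ineq)
    finally show ?thesis using v th by linarith
  qed
  ultimately show ?thesis using ball by auto
qed


lemma theta_small:
  fixes c :: 'a assumes "\<epsilon> > 0"
  shows "\<epsilon> / (4 * (norm c + 1)) > 0 \<and> \<epsilon> / (4 * (norm c + 1)) * norm c < \<epsilon> / 2"
proof -
  have n: "norm c + 1 > 0" by (simp add: add_nonneg_pos)
  have "\<epsilon> / (4 * (norm c + 1)) * norm c = (\<epsilon> / 4) * (norm c / (norm c + 1))" by simp
  also have "\<dots> \<le> (\<epsilon> / 4) * 1" using assms n by (intro mult_left_mono) auto
  finally have a: "\<epsilon> / (4 * (norm c + 1)) * norm c \<le> \<epsilon> / 4" by simp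
  have "\<epsilon> / (4 * (norm c + 1)) > 0" using assms n by simp
  then show ?thesis using a assms by linarith
qed

lemma G0:
  assumes ball: "ball lb \<epsilon> \<inter> affine hull C \<subseteq> C" and ep: "\<epsilon> > 0"
    and xv: "dist (x, v) (zb, lb) < min (\<delta>/2) (\<epsilon>/2)" "v \<in> subdiff g x"
  shows "x - zb \<in> SS \<and> norm (x - zb) < \<delta>/2 \<and> v \<in> C \<and> norm (v - lb) < \<epsilon>/2 \<and>
         g x = ereal (g0 + lb \<bullet> (x - zb))"
proof -
  define u where "u = x - zb"
  have x: "x = zb + u" by (simp add: u_def)
  have "dist x zb \<le> dist (x, v) (zb, lb)" "dist v lb \<le> dist (x, v) (zb, lb)"
    using dist_fst_le[of "(x, v)" "(zb, lb)"] dist_snd_le[of "(x, v)" "(zb, lb)"] by auto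
  then have nu: "norm u < \<delta>/2" and nv: "norm (v - lb) < \<epsilon>/2"
    using xv(1) by (auto simp: u_def dist_norm)
  have gl: "v \<in> C" "g (zb + u) = ereal (g0 + v \<bullet> u)"
    using gph_local[of v u] xv(2) nu x by auto
  have uS: "u \<in> SS" unfolding SS_def mem_Collect_eq
  proof (intro ballI)
    fix c assume c: "c \<in> C"
    define \<theta> where "\<theta> = \<epsilon> / (4 * (norm (c - lb) + 1))"
    have th: "\<theta> > 0" "\<theta> * norm (c - lb) < \<epsilon>/2" using theta_small[OF ep, of "c - lb"] by (auto simp: \<theta>_def)
    have "v + \<theta> *\<^sub>R (c - lb) \<in> C" "v + (-\<theta>) *\<^sub>R (c - lb) \<in> C"
      using th shift[OF ball gl(1) nv c, of \<theta>] shift[OF ball gl(1) nv c, of "-\<theta>"] by auto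
    then have "ereal (g0 + (v + \<theta> *\<^sub>R (c - lb)) \<bullet> u) \<le> g (zb + u)"
      "ereal (g0 + (v + (-\<theta>) *\<^sub>R (c - lb)) \<bullet> u) \<le> g (zb + u)" using C_iff by blast+
    moreover have "(v + \<theta> *\<^sub>R (c - lb)) \<bullet> u = v \<bullet> u + \<theta> * ((c - lb) \<bullet> u)"
      "(v + (-\<theta>) *\<^sub>R (c - lb)) \<bullet> u = v \<bullet> u - \<theta> * ((c - lb) \<bullet> u)"
      by (simp_all add: inner_add_left inner_diff_left)
    ultimately have "g0 + (v \<bullet> u + \<theta> * ((c - lb) \<bullet> u)) \<le> g0 + v \<bullet> u"
      "g0 + (v \<bullet> u - \<theta> * ((c - lb) \<bullet> u)) \<le> g0 + v \<bullet> u"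
      using gl(2) by simp_all
    then have "\<theta> * ((c - lb) \<bullet> u) = 0" by linarith
    then show "(c - lb) \<bullet> u = 0" using th(1) by simp
  qed
  have vu: "v \<bullet> u = lb \<bullet> u" using SS_C[OF uS gl(1)] .
  have ux: "x - zb = u" by (simp add: u_def)
  show ?thesis unfolding ux using uS nu gl nv vu x by simp
qed


lemma strict_near:
  assumes ball: "ball lb \<epsilon> \<inter> affine hull C \<subseteq> C" and ep: "\<epsilon> > 0"
    and zl: "dist (z, l) (zb, lb) < min (\<delta>/2) (\<epsilon>/2)" "l \<in> subdiff g z"
  shows "strictly_twice_epi_diff g z l"
proof -
  define \<rho> where "\<rho> = min (\<delta>/2) (\<epsilon>/2)"
  define F where "F = at_right (0::real) \<times>\<^sub>F attentive_filter g z l"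
  define \<Phi> where "\<Phi> = (\<lambda>(t, x, v). second_dq g x v t)"
  define E :: "('a \<times> real) set" where "E = {(w, r). w \<in> SS \<and> 0 \<le> r}"
  define h where "h = (\<lambda>w. if w \<in> SS then (0::ereal) else \<infinity>)"
  have epih: "epi h = E" by (auto simp: epi_def h_def E_def split: if_splits)
  have EV: "eventually (\<lambda>(t, x, v). 0 < t \<and> t < \<tau> \<and> dist (x, v) (zb, lb) < \<rho> \<and> v \<in> subdiff g x) F"
    if tau: "\<tau> > 0" for \<tau>
    unfolding F_def eventually_prod_filter
  proof (intro exI[of _ "\<lambda>t. 0 < t \<and> t < \<tau>"] exI[of _ "\<lambda>p. p \<in> ball (zb, lb) \<rho> \<and> p \<in> gph_subdiff g"] conjI)
    show "eventually (\<lambda>t. 0 < t \<and> t < \<tau>) (at_right (0::real))"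
      unfolding eventually_at_right[OF tau] using tau by blast
    show "eventually (\<lambda>p. p \<in> ball (zb, lb) \<rho> \<and> p \<in> gph_subdiff g) (attentive_filter g z l)"
      using zl(1) by (intro att_ev_open) (auto simp: \<rho>_def dist_commute)
  qed (auto simp: gph_subdiff_def dist_commute)
  have nb: "F \<noteq> bot"
    unfolding F_def prod_filter_eq_bot using att_nonbot[of z l g] zl(2)
    by (auto simp: gph_subdiff_def)
  have G: "x - zb \<in> SS \<and> norm (x - zb) < \<delta>/2 \<and> v \<in> C \<and> norm (v - lb) < \<epsilon>/2 \<and>
         g x = ereal (g0 + lb \<bullet> (x - zb))" if "dist (x, v) (zb, lb) < \<rho>" "v \<in> subdiff g x" for x v
    using G0[OF ball ep, of x v] that by (simp add: \<rho>_def)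
  have sub1: "E \<subseteq> PK_liminf (\<lambda>p. epi (\<Phi> p)) F"
  proof
    fix q assume "q \<in> E"
    then obtain w r where q: "q = (w, r)" "w \<in> SS" "0 \<le> r" by (auto simp: E_def)
    define \<tau> where "\<tau> = \<delta> / (2 * (norm w + 1))"
    have tau: "\<tau> > 0" using dpos by (simp add: \<tau>_def add_nonneg_pos)
    have tw: "\<tau> * norm w \<le> \<delta>/2"
    proof -
      have e: "\<tau> * norm w = (\<delta>/2) * (norm w / (norm w + 1))" by (simp add: \<tau>_def)
      have n1: "norm w / (norm w + 1) \<le> 1"
        by (subst divide_le_eq_1) (auto simp: add_nonneg_pos)
      have "(\<delta>/2) * (norm w / (norm w + 1)) \<le> (\<delta>/2) * 1" using dpos n1 by (intro mult_left_mono) auto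
      then show ?thesis using e by simp
    qed
    have "eventually (\<lambda>p. q \<in> epi (\<Phi> p)) F"
      using EV[OF tau]
    proof (rule eventually_mono, clarify)
      fix t x v assume tx: "0 < t" "t < \<tau>" "dist (x, v) (zb, lb) < \<rho>" "v \<in> subdiff g x"
      note Gx = G[OF tx(3,4)]
      define s where "s = (x - zb) + t *\<^sub>R w"
      have sS: "s \<in> SS" using Gx q(2) by (simp add: s_def SS_add SS_scale)
      have "norm s \<le> norm (x - zb) + t * norm w" unfolding s_def
        using norm_triangle_ineq[of "x - zb" "t *\<^sub>R w"] tx(1) by simp
      also have "t * norm w \<le> \<tau> * norm w" using tx by (intro mult_right_mono) auto
      then have "norm (x - zb) + t * norm w < \<delta>" using Gx tw by linarith
      finally have ns: "norm s < \<delta>" .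
      have xs: "x + t *\<^sub>R w = zb + s" by (simp add: s_def)
      have gxt: "g (x + t *\<^sub>R w) = ereal (g0 + lb \<bullet> s)" using AFF[OF sS ns] xs by simp
      have vw: "v \<bullet> w = lb \<bullet> w" using SS_C[OF q(2)] Gx by blast
      have "lb \<bullet> s = lb \<bullet> (x - zb) + t * (lb \<bullet> w)" by (simp add: s_def inner_add_right)
      moreover have "0 \<le> r * (t^2/2)" using q(3) by simp
      ultimately have "g (x + t *\<^sub>R w) \<le> ereal ((g0 + lb \<bullet> (x - zb)) + t * (v \<bullet> w) + r * (t^2/2))"
        using gxt vw by simp
      then show "q \<in> epi (\<Phi> (t, x, v))"
        unfolding q(1) epi_iff \<Phi>_def using dq_le_iff[where g=g and x=x, OF _ tx(1)] Gx
        by simp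
    qed
    then show "q \<in> PK_liminf (\<lambda>p. epi (\<Phi> p)) F"
      unfolding PK_liminf_def by (auto elim!: eventually_mono intro: bexI[of _ q])
  qed
  have sub2: "PK_limsup (\<lambda>p. epi (\<Phi> p)) F \<subseteq> E"
  proof
    fix q assume q: "q \<in> PK_limsup (\<lambda>p. epi (\<Phi> p)) F"
    obtain w r where qwr: "q = (w, r)" by (cases q)
    have fr: "frequently (\<lambda>p. \<exists>q'\<in>epi (\<Phi> p). dist q' (w, r) < e) F" if "e > 0" for e
      using q qwr that unfolding PK_limsup_def by blast
    have get: "\<exists>t x v w' r'. 0 < t \<and> t < \<tau> \<and> dist (x, v) (zb, lb) < \<rho> \<and> v \<in> subdiff g x \<and>
        second_dq g x v t w' \<le> ereal r' \<and> norm (w' - w) < e \<and> \<bar>r' - r\<bar> < e"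
      if "e > 0" "\<tau> > 0" for e \<tau>
    proof -
      have "frequently (\<lambda>p. (case p of (t, x, v) \<Rightarrow> 0 < t \<and> t < \<tau> \<and> dist (x, v) (zb, lb) < \<rho> \<and> v \<in> subdiff g x)
          \<and> (\<exists>q'\<in>epi (\<Phi> p). dist q' (w, r) < e)) F"
        using frequently_eventually_conj[OF fr[OF that(1)] EV[OF that(2)]] by (simp add: conj_commute)
      then obtain p where p: "(case p of (t, x, v) \<Rightarrow> 0 < t \<and> t < \<tau> \<and> dist (x, v) (zb, lb) < \<rho> \<and> v \<in> subdiff g x)"
          "\<exists>q'\<in>epi (\<Phi> p). dist q' (w, r) < e"
        using frequently_ex by blast
      obtain t x v where ptxv: "p = (t, x, v)" by (cases p) auto
      obtain w' r' where wr': "(w', r') \<in> epi (\<Phi> p)" "dist (w', r') (w, r) < e" using p(2) by auto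
      have "dist w' w < e" "dist r' r < e"
        using dist_fst_le[of "(w', r')" "(w, r)"] dist_snd_le[of "(w', r')" "(w, r)"] wr'(2) by auto
      then show ?thesis using p(1) wr'(1) unfolding ptxv
        by (intro exI[of _ t] exI[of _ x] exI[of _ v] exI[of _ w'] exI[of _ r'])
           (auto simp: \<Phi>_def epi_iff dist_norm dist_real_def)
    qed
    have r0: "0 \<le> r"
    proof (rule ccontr)
      assume "\<not> 0 \<le> r"
      then have e: "-r/2 > 0" by simp
      obtain t x v w' r' where A: "0 < t" "dist (x, v) (zb, lb) < \<rho>" "v \<in> subdiff g x"
        "second_dq g x v t w' \<le> ereal r'" "\<bar>r' - r\<bar> < -r/2"
        using get[OF e, of 1] by auto
      note Gx = G[OF A(2,3)]
      define gx where "gx = g0 + lb \<bullet> (x - zb)"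
      have gxe: "g x = ereal gx" using Gx by (simp add: gx_def)
      have up: "g (x + t *\<^sub>R w') \<le> ereal (gx + t * (v \<bullet> w') + r' * (t^2/2))"
        using dq_le_iff[where g=g and x=x, OF gxe A(1)] A(4) by simp
      have lo: "ereal (gx + v \<bullet> ((x + t *\<^sub>R w') - x)) \<le> g (x + t *\<^sub>R w')"
        using subdiff_iff[where g=g and x=x, OF gxe] A(3) by blast
      have "gx + t * (v \<bullet> w') \<le> gx + t * (v \<bullet> w') + r' * (t^2/2)"
        using order.trans[OF lo up] by simp
      then have "0 \<le> r' * (t^2/2)" by simp
      moreover have "r' < 0" using A(5) \<open>\<not> 0 \<le> r\<close> by linarith
      moreover have "t^2/2 > 0" using A(1) by simp
      ultimately show False by (simp add: mult_less_0_iff mult_le_0_iff zero_le_mult_iff)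
    qed
    have wS: "w \<in> SS"
    proof (rule ccontr)
      assume "w \<notin> SS"
      then obtain c where c: "c \<in> C" "(c - lb) \<bullet> w \<noteq> 0" by (auto simp: SS_def)
      define \<theta>0 where "\<theta>0 = \<epsilon> / (4 * (norm (c - lb) + 1))"
      have th0: "\<theta>0 > 0" "\<theta>0 * norm (c - lb) < \<epsilon>/2" using theta_small[OF ep, of "c - lb"] by (auto simp: \<theta>0_def)
      define \<theta> where "\<theta> = (if (c - lb) \<bullet> w > 0 then \<theta>0 else - \<theta>0)"
      have thabs: "\<bar>\<theta>\<bar> * norm (c - lb) < \<epsilon>/2" using th0 by (simp add: \<theta>_def)
      define e0 where "e0 = \<theta> *\<^sub>R (c - lb)"
      define \<kappa> where "\<kappa> = e0 \<bullet> w"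
      have kpos: "\<kappa> > 0"
      proof (cases "(c - lb) \<bullet> w > 0")
        case True then show ?thesis using th0 by (simp add: \<kappa>_def e0_def \<theta>_def)
      next
        case False
        then have "(c - lb) \<bullet> w < 0" using c(2) by simp
        then show ?thesis using th0 False by (simp add: \<kappa>_def e0_def \<theta>_def mult_pos_neg)
      qed
      have ne0: "norm e0 > 0" using kpos by (auto simp: \<kappa>_def)
      define e where "e = min 1 (\<kappa> / (2 * norm e0))"
      have epos: "e > 0" using kpos ne0 by (simp add: e_def)
      define \<tau> where "\<tau> = \<kappa> / (r + 1)"
      have r1: "r + 1 > 0" using r0 by simp
      have tpos: "\<tau> > 0" using kpos r1 by (simp add: \<tau>_def)
      obtain t x v w' r' where B: "0 < t" "t < \<tau>" "dist (x, v) (zb, lb) < \<rho>" "v \<in> subdiff g x"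
        "second_dq g x v t w' \<le> ereal r'" "norm (w' - w) < e" "\<bar>r' - r\<bar> < e"
        using get[OF epos tpos] by blast
      note Gx = G[OF B(3,4)]
      define s where "s = x - zb"
      define gx where "gx = g0 + lb \<bullet> s"
      have gxe: "g x = ereal gx" using Gx by (simp add: gx_def s_def)
      have sS: "s \<in> SS" and vC: "v \<in> C" and nv: "norm (v - lb) < \<epsilon>/2" using Gx by (auto simp: s_def)
      have up: "g (x + t *\<^sub>R w') \<le> ereal (gx + t * (v \<bullet> w') + r' * (t^2/2))"
        using dq_le_iff[where g=g and x=x, OF gxe B(1)] B(5) by simp
      have ve0: "v + e0 \<in> C" unfolding e0_def by (rule shift[OF ball vC nv c(1) thabs])
      have "ereal (g0 + (v + e0) \<bullet> (s + t *\<^sub>R w')) \<le> g (zb + (s + t *\<^sub>R w'))"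
        using C_iff ve0 by blast
      moreover have "zb + (s + t *\<^sub>R w') = x + t *\<^sub>R w'" by (simp add: s_def)
      ultimately have "ereal (g0 + (v + e0) \<bullet> (s + t *\<^sub>R w')) \<le> g (x + t *\<^sub>R w')"
        by simp
      then have "ereal (g0 + (v + e0) \<bullet> (s + t *\<^sub>R w')) \<le> ereal (gx + t * (v \<bullet> w') + r' * (t^2/2))"
        using up by (rule order.trans)
      then have ineq: "g0 + (v + e0) \<bullet> (s + t *\<^sub>R w') \<le> gx + t * (v \<bullet> w') + r' * (t^2/2)" by simp
      have vs: "v \<bullet> s = lb \<bullet> s" using SS_C[OF sS vC] .
      have e0s: "e0 \<bullet> s = 0" using sS c(1) by (simp add: e0_def SS_def)
      have "(v + e0) \<bullet> (s + t *\<^sub>R w') = v \<bullet> s + e0 \<bullet> s + t * (v \<bullet> w') + t * (e0 \<bullet> w')"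
        by (simp add: inner_add_left inner_add_right distrib_left)
      then have "t * (e0 \<bullet> w') \<le> t * (r' * t / 2)"
        using ineq vs e0s by (simp add: gx_def power2_eq_square algebra_simps)
      then have h1: "e0 \<bullet> w' \<le> r' * t / 2" using B(1) by simp
      have "\<bar>e0 \<bullet> (w' - w)\<bar> \<le> norm e0 * norm (w' - w)" by (rule Cauchy_Schwarz_ineq2)
      also have "\<dots> < norm e0 * (\<kappa> / (2 * norm e0))"
        using B(6) ne0 by (intro mult_strict_left_mono) (auto simp: e_def)
      also have "\<dots> = \<kappa> / 2" using ne0 by simp
      finally have "\<bar>e0 \<bullet> w' - e0 \<bullet> w\<bar> < \<kappa> / 2" by (simp add: inner_diff_right)
      then have "e0 \<bullet> w' > \<kappa> / 2" unfolding \<kappa>_def by linarith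
      moreover have "r' < r + 1" using B(7) by (simp add: e_def abs_less_iff)
      then have "r' * t < (r + 1) * t" using B(1) by (simp add: mult_strict_right_mono)
      moreover have "(r + 1) * t < (r + 1) * \<tau>" using B(2) r1 by simp
      moreover have "(r + 1) * \<tau> = \<kappa>" using r1 by (simp add: \<tau>_def)
      ultimately show False using h1 by linarith
    qed
    show "q \<in> E" using r0 wS qwr by (simp add: E_def)
  qed
  have sub3: "PK_liminf (\<lambda>p. epi (\<Phi> p)) F \<subseteq> PK_limsup (\<lambda>p. epi (\<Phi> p)) F"
    unfolding PK_liminf_def PK_limsup_def using eventually_frequently[OF nb] by blast
  have "PK_liminf (\<lambda>p. epi (\<Phi> p)) F = epi h" "PK_limsup (\<lambda>p. epi (\<Phi> p)) F = epi h"
    using sub1 sub2 sub3 epih by blast+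
  then show ?thesis
    unfolding strictly_twice_epi_diff_def epi_converges_def PK_converges_def
    unfolding \<Phi>_def F_def by blast
qed


lemma sep_dir:
  assumes nri: "lb \<notin> rel_interior C"
  shows "\<exists>u c1. c1 \<in> C \<and> (lb - c1) \<bullet> u > 0 \<and> (\<forall>a\<in>A. a \<bullet> u \<le> 0) \<and> (\<forall>p\<in>P. p \<bullet> u \<le> lb \<bullet> u)"
proof -
  have Cne: "C \<noteq> {}" using lbC by blast
  obtain c1 where c1: "c1 \<in> C" "\<forall>e>1. (1 - e) *\<^sub>R c1 + e *\<^sub>R lb \<notin> C"
    using nri convex_rel_interior_iff[OF C_conv Cne, of lb] by auto
  define d where "d = lb - c1"
  define G where "G = (\<lambda>p. p - lb) ` P \<union> A"
  define T where "T = convex_cone hull G"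
  define T' where "T' = conic hull ((\<lambda>c. c - lb) ` C)"
  have "convex_cone T'"
    unfolding convex_cone_def T'_def
    using Cne C_conv by (auto simp: conic_hull_eq_empty conic_conic_hull intro!: convex_conic_hull convex_translation_subtract)
  moreover have "G \<subseteq> T'"
  proof
    fix x assume "x \<in> G"
    then consider p where "p \<in> P" "x = p - lb" | "x \<in> A" unfolding G_def by blast
    then have "x \<in> (\<lambda>c. c - lb) ` C"
    proof cases
      case 1 then show ?thesis using P_C by auto
    next
      case 2
      have "lb + x \<in> C" using A_C[OF 2 lbC] .
      then show ?thesis by (force intro: image_eqI[of _ _ "lb + x"])
    qed
    then show "x \<in> T'" unfolding T'_def by (rule hull_inc)
  qed
  ultimately have TT': "T \<subseteq> T'" unfolding T_def by (rule hull_minimal[rotated])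
  have dT': "d \<notin> T'"
  proof
    assume "d \<in> T'"
    then obtain \<mu> c where mc: "0 \<le> \<mu>" "c \<in> C" "d = \<mu> *\<^sub>R (c - lb)"
      unfolding T'_def conic_hull_explicit by auto
    show False
    proof (cases "\<mu> = 0")
      case True
      then have "c1 = lb" using mc by (simp add: d_def)
      then show False using c1(2)[rule_format, of 2] lbC by (simp add: scaleR_2)
    next
      case False
      then have mp: "\<mu> > 0" using mc by simp
      have "(1 - (1 + 1/\<mu>)) *\<^sub>R c1 + (1 + 1/\<mu>) *\<^sub>R lb = lb + (1/\<mu>) *\<^sub>R d"
        by (simp add: d_def algebra_simps)
      also have "\<dots> = c" using mp mc by simp
      finally show False using c1(2)[rule_format, of "1 + 1/\<mu>"] mp mc(2) by simp
    qed
  qed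
  have dT: "d \<notin> T" using dT' TT' by blast
  have finG: "finite G" using finP finA by (simp add: G_def)
  have "closed T" unfolding T_def by (rule closed_convex_cone_hull[OF finG])
  moreover have "convex T" unfolding T_def by (rule convex_convex_cone_hull)
  ultimately obtain a b where ab: "a \<bullet> d < b" "\<forall>x\<in>T. a \<bullet> x > b"
    using separating_hyperplane_closed_point dT by blast
  have "0 \<in> T" unfolding T_def by (rule convex_cone_hull_contains_0)
  then have bneg: "b < 0" using ab(2) by force
  have ax: "a \<bullet> x \<ge> 0" if "x \<in> T" for x
  proof (rule ccontr)
    assume "\<not> a \<bullet> x \<ge> 0"
    then have neg: "a \<bullet> x < 0" by simp
    define \<mu> where "\<mu> = b / (a \<bullet> x)"
    have "\<mu> \<ge> 0" using neg bneg by (simp add: \<mu>_def divide_nonpos_neg)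
    then have "\<mu> *\<^sub>R x \<in> T" using that unfolding T_def by (rule convex_cone_hull_mul[rotated])
    then have "a \<bullet> (\<mu> *\<^sub>R x) > b" using ab(2) by blast
    moreover have "a \<bullet> (\<mu> *\<^sub>R x) = b" using neg by (simp add: \<mu>_def)
    ultimately show False by simp
  qed
  define u where "u = - a"
  have GT: "G \<subseteq> T" unfolding T_def by (rule hull_subset)
  have "(lb - c1) \<bullet> u > 0" using ab(1) bneg by (simp add: u_def d_def inner_commute)
  moreover have "\<forall>a'\<in>A. a' \<bullet> u \<le> 0"
    using ax GT by (force simp: u_def G_def inner_commute)
  moreover have "\<forall>p\<in>P. p \<bullet> u \<le> lb \<bullet> u"
  proof
    fix p assume "p \<in> P"
    then have "a \<bullet> (p - lb) \<ge> 0" using ax GT by (force simp: G_def)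
    then show "p \<bullet> u \<le> lb \<bullet> u" by (simp add: u_def inner_diff_right inner_commute)
  qed
  ultimately show ?thesis using c1(1) by blast
qed


lemma not_strict:
  assumes nri: "lb \<notin> rel_interior C"
  shows "\<not> strictly_twice_epi_diff g zb lb"
proof
  assume "strictly_twice_epi_diff g zb lb"
  then obtain h where hc: "PK_converges (\<lambda>p. epi ((\<lambda>(t, x, v). second_dq g x v t) p))
      (at_right 0 \<times>\<^sub>F attentive_filter g zb lb) (epi h)"
    unfolding strictly_twice_epi_diff_def epi_converges_def by blast
  define F where "F = at_right (0::real) \<times>\<^sub>F attentive_filter g zb lb"
  define \<Phi> where "\<Phi> = (\<lambda>(t, x, v). second_dq g x v t)"
  have eq: "PK_liminf (\<lambda>p. epi (\<Phi> p)) F = PK_limsup (\<lambda>p. epi (\<Phi> p)) F"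
    using hc unfolding PK_converges_def \<Phi>_def F_def by simp
  obtain u c1 where uc: "c1 \<in> C" "(lb - c1) \<bullet> u > 0" "\<forall>a\<in>A. a \<bullet> u \<le> 0" "\<forall>p\<in>P. p \<bullet> u \<le> lb \<bullet> u"
    using sep_dir[OF nri] by blast
  define d where "d = lb - c1"
  define \<kappa> where "\<kappa> = d \<bullet> u"
  have kpos: "\<kappa> > 0" using uc(2) by (simp add: \<kappa>_def d_def)
  have gph0: "(zb, lb) \<in> gph_subdiff g" using lbC by (simp add: gph_subdiff_def)
  \<comment> \<open>(u,0) lies in the outer limit\<close>
  have "(u, 0) \<in> PK_limsup (\<lambda>p. epi (\<Phi> p)) F"
    unfolding PK_limsup_def mem_Collect_eq
  proof (intro allI impI)
    fix e :: real assume e: "e > 0"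
    show "frequently (\<lambda>p. \<exists>q\<in>epi (\<Phi> p). dist q (u, 0) < e) F"
      unfolding frequently_def
    proof
      assume "eventually (\<lambda>p. \<not> (\<exists>q\<in>epi (\<Phi> p). dist q (u, 0) < e)) F"
      then obtain Pf Pg where PfPg: "eventually Pf (at_right (0::real))" "eventually Pg (attentive_filter g zb lb)"
        "\<forall>x y. Pf x \<longrightarrow> Pg y \<longrightarrow> \<not> (\<exists>q\<in>epi (\<Phi> (x, y)). dist q (u, 0) < e)"
        unfolding F_def eventually_prod_filter by blast
      have Pg0: "Pg (zb, lb)" using att_point[OF PfPg(2) gph0] .
      obtain bb where bb: "bb > 0" "\<forall>y>0. y < bb \<longrightarrow> Pf y"
        using PfPg(1) unfolding eventually_at_right[OF zero_less_one] by blast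
      define t where "t = min (bb/2) (\<delta> / (2 * (norm u + 1)))"
      have tpos: "t > 0" using bb dpos by (simp add: t_def add_nonneg_pos)
      have "t < bb" using bb by (simp add: t_def)
      then have "Pf t" using bb tpos by blast
      have ntu: "norm (t *\<^sub>R u) < \<delta>"
      proof -
        have "t * norm u \<le> (\<delta> / (2 * (norm u + 1))) * norm u"
          by (intro mult_right_mono) (auto simp: t_def)
        also have "\<dots> = (\<delta>/2) * (norm u / (norm u + 1))" by simp
        also have "\<dots> \<le> (\<delta>/2) * 1"
          using dpos by (intro mult_left_mono) (auto simp: divide_le_eq_1 add_nonneg_pos)
        finally show ?thesis using tpos dpos by simp
      qed
      have Atu: "\<forall>a\<in>A. a \<bullet> (t *\<^sub>R u) \<le> 0" using uc(3) tpos by (simp add: mult_nonneg_nonpos)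
      have "Max ((\<lambda>p. p \<bullet> (t *\<^sub>R u)) ` P) \<le> t * (lb \<bullet> u)"
        using finP neP uc(4) tpos by (auto simp: Max_le_iff mult_left_mono)
      then have "g (zb + t *\<^sub>R u) \<le> ereal (g0 + t * (lb \<bullet> u) + 0 * (t^2/2))"
        using loc ntu Atu by simp
      then have "second_dq g zb lb t u \<le> ereal 0"
        using dq_le_iff[where g=g and x=zb, OF gz tpos] by simp
      then have "(u, 0) \<in> epi (\<Phi> (t, zb, lb))" by (simp add: \<Phi>_def epi_iff)
      then show False using PfPg(3) \<open>Pf t\<close> Pg0 e by force
    qed
  qed
  then have "(u, 0) \<in> PK_liminf (\<lambda>p. epi (\<Phi> p)) F" using eq by simp
  \<comment> \<open>but not in the inner limit\<close>
  moreover define e where "e = min 1 (\<kappa> / (2 * (norm d + 1)))"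
  have epos: "e > 0" using kpos by (simp add: e_def add_nonneg_pos)
  ultimately have "eventually (\<lambda>p. \<exists>q\<in>epi (\<Phi> p). dist q (u, 0) < e) F"
    unfolding PK_liminf_def by blast
  then obtain Pf Pg where PfPg: "eventually Pf (at_right (0::real))" "eventually Pg (attentive_filter g zb lb)"
    "\<forall>x y. Pf x \<longrightarrow> Pg y \<longrightarrow> (\<exists>q\<in>epi (\<Phi> (x, y)). dist q (u, 0) < e)"
    unfolding F_def eventually_prod_filter by blast
  obtain \<rho> where \<rho>: "\<rho> > 0" "\<forall>x v. v \<in> subdiff g x \<longrightarrow> dist (x, v) (zb, lb) < \<rho> \<longrightarrow> g x = g zb \<longrightarrow> Pg (x, v)"
    using att_ev[OF PfPg(2)] by blast
  define \<theta> where "\<theta> = min (1/2) (\<rho> / (2 * (norm (c1 - lb) + 1)))"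
  have thpos: "\<theta> > 0" and th1: "\<theta> \<le> 1" using \<rho> by (auto simp: \<theta>_def add_nonneg_pos)
  define v where "v = lb + \<theta> *\<^sub>R (c1 - lb)"
  have vC: "v \<in> C"
  proof -
    have "(1 - \<theta>) *\<^sub>R lb + \<theta> *\<^sub>R c1 \<in> C"
      using C_conv lbC uc(1) thpos th1 unfolding convex_def by auto
    moreover have "(1 - \<theta>) *\<^sub>R lb + \<theta> *\<^sub>R c1 = v" by (simp add: v_def algebra_simps)
    ultimately show ?thesis by simp
  qed
  have "dist (zb, v) (zb, lb) = norm (\<theta> *\<^sub>R (c1 - lb))" by (simp add: dist_Pair_Pair dist_norm v_def)
  also have "\<dots> = \<theta> * norm (c1 - lb)" using thpos by simp
  also have "\<dots> \<le> (\<rho> / (2 * (norm (c1 - lb) + 1))) * norm (c1 - lb)"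
    by (intro mult_right_mono) (auto simp: \<theta>_def)
  also have "\<dots> = (\<rho>/2) * (norm (c1 - lb) / (norm (c1 - lb) + 1))" by simp
  also have "\<dots> \<le> (\<rho>/2) * 1"
    using \<rho> by (intro mult_left_mono) (auto simp: divide_le_eq_1 add_nonneg_pos)
  finally have "dist (zb, v) (zb, lb) < \<rho>" using \<rho> by simp
  then have Pgv: "Pg (zb, v)" using \<rho>(2) vC by blast
  obtain bb where bb: "bb > 0" "\<forall>y>0. y < bb \<longrightarrow> Pf y"
    using PfPg(1) unfolding eventually_at_right[OF zero_less_one] by blast
  define t where "t = min (bb/2) (\<theta> * \<kappa> / 2)"
  have tpos: "t > 0" using bb thpos kpos by (simp add: t_def)
  have "t < bb" using bb by (simp add: t_def)
  then have "Pf t" using bb tpos by blast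
  then obtain q where q: "q \<in> epi (\<Phi> (t, zb, v))" "dist q (u, 0) < e" using PfPg(3) Pgv by blast
  obtain w' r' where qw: "q = (w', r')" by (cases q)
  have "dist w' u < e" "dist r' 0 < e"
    using dist_fst_le[of "(w', r')" "(u, 0)"] dist_snd_le[of "(w', r')" "(u, 0)"] q(2) qw by auto
  then have nw: "norm (w' - u) < e" and r'1: "r' < 1" by (auto simp: dist_norm e_def)
  have "second_dq g zb v t w' \<le> ereal r'" using q(1) qw by (simp add: \<Phi>_def epi_iff)
  then have up: "g (zb + t *\<^sub>R w') \<le> ereal (g0 + t * (v \<bullet> w') + r' * (t^2/2))"
    using dq_le_iff[where g=g and x=zb, OF gz tpos] by simp
  have lo: "ereal (g0 + lb \<bullet> (t *\<^sub>R w')) \<le> g (zb + t *\<^sub>R w')" using C_iff lbC by blast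
  have "g0 + t * (lb \<bullet> w') \<le> g0 + t * (v \<bullet> w') + r' * (t^2/2)"
    using order.trans[OF lo up] by simp
  moreover have "lb \<bullet> w' - v \<bullet> w' = \<theta> * (d \<bullet> w')"
    by (simp add: v_def d_def inner_add_left inner_diff_left algebra_simps)
  ultimately have "t * (\<theta> * (d \<bullet> w')) \<le> t * (r' * t / 2)"
    by (simp add: power2_eq_square algebra_simps)
  then have h1: "\<theta> * (d \<bullet> w') \<le> r' * t / 2" using tpos by simp
  have "\<bar>d \<bullet> (w' - u)\<bar> \<le> norm d * norm (w' - u)" by (rule Cauchy_Schwarz_ineq2)
  also have "\<dots> \<le> norm d * e" using nw by (intro mult_left_mono) auto
  also have "\<dots> \<le> norm d * (\<kappa> / (2 * (norm d + 1)))" by (intro mult_left_mono) (auto simp: e_def)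
  also have "\<dots> = (\<kappa>/2) * (norm d / (norm d + 1))" by simp
  also have "\<dots> \<le> (\<kappa>/2) * 1"
    using kpos by (intro mult_left_mono) (auto simp: divide_le_eq_1 add_nonneg_pos)
  finally have "\<bar>d \<bullet> w' - \<kappa>\<bar> \<le> \<kappa>/2" by (simp add: \<kappa>_def inner_diff_right)
  then have "d \<bullet> w' \<ge> \<kappa>/2" by linarith
  then have "\<theta> * (d \<bullet> w') \<ge> \<theta> * (\<kappa>/2)" using thpos by (intro mult_left_mono) auto
  moreover have "r' * t < t" using r'1 tpos by simp
  moreover have "t \<le> \<theta> * \<kappa> / 2" by (simp add: t_def)
  moreover have "\<theta> * (\<kappa> / 2) = \<theta> * \<kappa> / 2" by simp
  moreover have "\<theta> * \<kappa> > 0" using thpos kpos by simp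
  ultimately show False using h1 by linarith
qed

end


theorem theorem4p3:
  fixes g :: "'a::euclidean_space \<Rightarrow> ereal" and zb lb :: 'a
  assumes "polyhedral_fun g"
    and "lb \<in> subdiff g zb"
  shows "(\<exists>U. open U \<and> (zb, lb) \<in> U \<and>
            (\<forall>z l. (z, l) \<in> U \<and> l \<in> subdiff g z \<longrightarrow> strictly_twice_epi_diff g z l))
         \<longleftrightarrow> lb \<in> rel_interior (subdiff g zb)"
proof -
  obtain g0 where gz: "g zb = ereal g0" using subdiff_finite[OF assms(2)] by blast
  obtain P A \<delta> where pl: "finite P" "P \<noteq> {}" "finite A" "\<delta> > 0"
     "\<forall>p\<in>P. \<forall>y. ereal (g0 + p \<bullet> y) \<le> g (zb + y)"
     "\<forall>a\<in>A. \<forall>y. g (zb + y) \<noteq> \<infinity> \<longrightarrow> a \<bullet> y \<le> 0"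
     "\<forall>u. norm u < \<delta> \<longrightarrow> g (zb + u) =
        (if \<forall>a\<in>A. a \<bullet> u \<le> 0 then ereal (g0 + Max ((\<lambda>p. p \<bullet> u) ` P)) else \<infinity>)"
    using poly_local[OF assms(1) gz] by blast
  interpret PL g zb lb g0 P A \<delta>
    by (rule PL.intro[OF gz assms(2) pl])
  show ?thesis
  proof
    assume "\<exists>U. open U \<and> (zb, lb) \<in> U \<and>
            (\<forall>z l. (z, l) \<in> U \<and> l \<in> subdiff g z \<longrightarrow> strictly_twice_epi_diff g z l)"
    then have st: "strictly_twice_epi_diff g zb lb" using assms(2) by blast
    show "lb \<in> rel_interior (subdiff g zb)"
      using not_strict st by blast
  next
    assume ri: "lb \<in> rel_interior (subdiff g zb)"
    obtain \<epsilon> where ep: "\<epsilon> > 0" "ball lb \<epsilon> \<inter> affine hull (subdiff g zb) \<subseteq> subdiff g zb"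
      using ri mem_rel_interior_ball by blast
    show "\<exists>U. open U \<and> (zb, lb) \<in> U \<and>
            (\<forall>z l. (z, l) \<in> U \<and> l \<in> subdiff g z \<longrightarrow> strictly_twice_epi_diff g z l)"
    proof (intro exI[of _ "ball (zb, lb) (min (\<delta>/2) (\<epsilon>/2))"] conjI allI impI)
      show "open (ball (zb, lb) (min (\<delta>/2) (\<epsilon>/2)))" by simp
      show "(zb, lb) \<in> ball (zb, lb) (min (\<delta>/2) (\<epsilon>/2))" using ep(1) pl(4) by simp
      fix z l assume zl: "(z, l) \<in> ball (zb, lb) (min (\<delta>/2) (\<epsilon>/2)) \<and> l \<in> subdiff g z"
      then have "dist (z, l) (zb, lb) < min (\<delta>/2) (\<epsilon>/2)" by (simp add: dist_commute)
      then show "strictly_twice_epi_diff g z l" using strict_near[OF ep(2) ep(1)] zl by blast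
    qed
  qed
qed

end
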